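(* Let $k \geq 2$ and let $\Sigma_k$ be an alphabet with $k$ letters. For $n \geq 0$ let $p_k(n)$ be the number of palstars of length $2n$ over $\Sigma_k$, and let $u_k(n)$ be the number of unbordered strings of length $n$ over $\Sigma_k$. Then for all $n \geq 1$, $$p_k(n) = \sum_{1 \leq i \leq n} u_k(i)\, p_k(n-i).$$
   Context: Let $P = \{ x x^R : x \in \Sigma_k^+\}$ be the set of nonempty even-length palindromes over $\Sigma_k$ (here $x^R$ is the reversal of $x$). A palstar is an element of $P^* = \bigcup_{i\ge 0} P^i$, i.e. a (possibly empty) concatenation of nonempty even-length palindromes; in particular the empty string is a palstar, so $p_k(0)=1$. A nonempty string $x$ is a border of a string $y$ if $x \neq y$ and $x$ is both a prefix and a suffix of $y$; $y$ is unbordered if it has no border (so the empty string and every single letter are unbordered, and $u_k(0)=1$). *)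

theory Defs
  imports Main "HOL-Library.Sublist"
begin

definition even_pal :: "'a list \<Rightarrow> bool" where
  "even_pal w \<longleftrightarrow> (\<exists>x. x \<noteq> [] \<and> w = x @ rev x)"

inductive palstar :: "'a list \<Rightarrow> bool" where
  palstar_Nil: "palstar []"
| palstar_app: "even_pal p \<Longrightarrow> palstar w \<Longrightarrow> palstar (p @ w)"

definition is_border :: "'a list \<Rightarrow> 'a list \<Rightarrow> bool" where
  "is_border x y \<longleftrightarrow> x \<noteq> [] \<and> x \<noteq> y \<and> prefix x y \<and> suffix x y"

definition unbordered :: "'a list \<Rightarrow> bool" where
  "unbordered y \<longleftrightarrow> \<not> (\<exists>x. is_border x y)"

definition pal_count :: "'a set \<Rightarrow> nat \<Rightarrow> nat" where
  "pal_count \<Sigma> n = card {w \<in> lists \<Sigma>. length w = 2 * n \<and> palstar w}"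

definition unb_count :: "'a set \<Rightarrow> nat \<Rightarrow> nat" where
  "unb_count \<Sigma> n = card {w \<in> lists \<Sigma>. length w = n \<and> unbordered w}"

end

theory Submission
  imports Defs
begin

lemma even_pal_iff: "even_pal w \<longleftrightarrow> w \<noteq> [] \<and> even (length w) \<and> rev w = w"
proof
  assume "even_pal w"
  then obtain x where "x \<noteq> []" "w = x @ rev x" unfolding even_pal_def by blast
  then show "w \<noteq> [] \<and> even (length w) \<and> rev w = w" by simp
next
  assume A: "w \<noteq> [] \<and> even (length w) \<and> rev w = w"
  define h where "h = length w div 2"
  have L: "length w = 2 * h" using A h_def by auto
  have "rev w = rev (drop h w) @ rev (take h w)"
    by (metis append_take_drop_id rev_append)
  hence "take h w @ drop h w = rev (drop h w) @ rev (take h w)"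
    using A by simp
  moreover have "length (take h w) = length (rev (drop h w))" using L by simp
  ultimately have "take h w = rev (drop h w)"
    using append_eq_append_conv by blast
  hence "w = take h w @ rev (take h w)"
    by (metis append_take_drop_id rev_rev_ident)
  moreover have "take h w \<noteq> []" using A L by (cases w) auto
  ultimately show "even_pal w" unfolding even_pal_def by blast
qed

lemma palstar_append: "palstar u \<Longrightarrow> palstar v \<Longrightarrow> palstar (u @ v)"
  by (induction rule: palstar.induct) (auto intro: palstar.intros)

lemma border_nth:
  assumes "take m x = drop (length x - m) x" "m \<le> length x" "j < m"
  shows "x ! j = x ! (length x - m + j)"
proof -
  have "take m x ! j = drop (length x - m) x ! j" by (simp only: assms(1))
  moreover have "take m x ! j = x ! j" using assms(3) by simp
  moreover have "drop (length x - m) x ! j = x ! (length x - m + j)" using assms(2) by (simp add: nth_drop)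
  ultimately show ?thesis by simp
qed

lemma border_shift:
  assumes B: "take m x = drop (length x - m) x" and "length x < 2*m" and "m \<le> length x"
  shows "take (2*m - length x) x = drop (length x - (2*m - length x)) x"
proof (rule nth_equalityI)
  show "length (take (2*m - length x) x) = length (drop (length x - (2*m - length x)) x)"
    using assms by simp
next
  fix j assume "j < length (take (2*m - length x) x)"
  hence j: "j < 2*m - length x" by simp
  have "x ! j = x ! (length x - m + j)" using border_nth[OF B] assms j by simp
  also have "\<dots> = x ! (length x - m + (length x - m + j))"
    using border_nth[OF B, of "length x - m + j"] assms j by simp
  also have "length x - m + (length x - m + j) = length x - (2*m - length x) + j"
    using assms j by simp
  finally show "take (2*m - length x) x ! j = drop (length x - (2*m - length x)) x ! j"
    using assms j by (simp add: nth_drop)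
qed

lemma pal_prefix_border:
  assumes "rev P = P" "rev (take m P) = take m P"
  shows "take m P = drop (length P - m) P"
  using assms by (metis rev_take)

lemma border_pal:
  assumes "rev P = P" "take m P = drop (length P - m) P"
  shows "rev (take m P) = take m P"
  using assms by (metis rev_take)

definition prim :: "'a list \<Rightarrow> bool" where
  "prim P \<longleftrightarrow> even_pal P \<and> (\<forall>j. 0 < j \<and> j < length P \<longrightarrow> \<not> even_pal (take j P))"

lemma prim_unique:
  assumes "prim P" "prim Q" "take (length P) w = P" "take (length Q) w = Q"
  shows "P = Q"
proof -
  have "\<not> length P < length Q"
    if "prim P" "prim Q" "take (length P) w = P" "take (length Q) w = Q" for P Q :: "'a list"
  proof
    assume lt: "length P < length Q"
    have "take (length P) Q = P" using that lt by (metis min.absorb1 less_imp_le take_take)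
    moreover have "0 < length P" using that(1) by (simp add: prim_def even_pal_iff)
    ultimately show False using that(2) lt unfolding prim_def using that(1) prim_def by metis
  qed
  hence "length P = length Q" using assms by (meson linorder_neqE_nat)
  thus ?thesis using assms by metis
qed

lemma prim_even_pal: "prim P \<Longrightarrow> even_pal P" by (simp add: prim_def)

lemma kmp_step:
  assumes pP: "prim P" and ep: "even_pal p" and tk: "take (length P) p = P"
    and le: "length P \<le> length p"
  shows "\<exists>s. palstar s \<and> p = P @ s"
proof -
  define L where "L = length p"
  define m where "m = length P"
  have Pp: "rev P = P" "even m" "P \<noteq> []" using pP unfolding m_def prim_def even_pal_iff by auto
  have pp: "rev p = p" "even L" using ep unfolding L_def even_pal_iff by auto
  have B: "take m p = drop (L - m) p"
    using pal_prefix_border[of p m] pp Pp tk unfolding m_def L_def by simp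
  consider "m = L" | "2*m \<le> L" | "m < L \<and> L < 2*m" using le unfolding m_def L_def by linarith
  then show ?thesis
  proof cases
    case 1
    then have "p = P" using tk unfolding m_def L_def by (metis take_all_iff order_refl)
    then show ?thesis using palstar.intros by auto
  next
    case 2
    define z where "z = drop m (take (L - m) p)"
    have dec: "p = P @ z @ P"
    proof -
      have "p = take m p @ drop m p" by simp
      also have "drop m p = z @ drop (L - m) p"
        unfolding z_def using 2
        by (metis append_take_drop_id diff_le_self drop_drop drop_take le_add_diff_inverse2 mult_2 add_le_imp_le_diff)
      finally show ?thesis using B tk unfolding m_def by simp
    qed
    have "P @ z @ P = P @ rev z @ P" using pp(1) dec Pp(1)
      by (metis append_assoc rev_append)
    hence zr: "rev z = z" by simp
    have zl: "even (length z)" using dec pp(2) Pp(2) unfolding L_def m_def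
      by (metis (no_types, lifting) even_add length_append)
    have "palstar (z @ P)"
    proof (cases "z = []")
      case True
      then show ?thesis using palstar_app[OF prim_even_pal[OF pP] palstar_Nil] by simp
    next
      case False
      then show ?thesis using palstar_app[OF _ palstar_app[OF prim_even_pal[OF pP] palstar_Nil]] zr zl
        by (simp add: even_pal_iff)
    qed
    then show ?thesis using dec by auto
  next
    case 3
    define r where "r = 2*m - L"
    have Br: "take r p = drop (L - r) p"
      using border_shift[of m p] B 3 unfolding r_def L_def by auto
    have "rev (take r p) = take r p" using border_pal[OF pp(1)] Br unfolding L_def by blast
    moreover have "even r" "0 < r" "r < m" using 3 Pp(2) pp(2) unfolding r_def by auto
    moreover have "take r P = take r p" using tk \<open>r < m\<close> unfolding m_def
      by (metis min.absorb1 less_imp_le take_take)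
    moreover have "r \<le> length p" using 3 \<open>r < m\<close> unfolding L_def by simp
    ultimately have "even_pal (take r P)" "0 < r" "r < length P"
      using 3 unfolding m_def by (auto simp: even_pal_iff min_absorb2)
    then show ?thesis using pP unfolding prim_def by blast
  qed
qed

lemma palstar_decomp:
  assumes "palstar w" "w \<noteq> []"
  shows "\<exists>P w'. prim P \<and> palstar w' \<and> w = P @ w'"
  using assms
proof cases
  case palstar_Nil
  then show ?thesis using assms by simp
next
  case (palstar_app p1 w1)
  define Q where "Q = (\<lambda>m. 0 < m \<and> m \<le> length p1 \<and> even_pal (take m p1))"
  have "Q (length p1)" using palstar_app unfolding Q_def by (simp add: even_pal_iff)
  then obtain m where m: "Q m" "\<forall>j<m. \<not> Q j" using exists_least_iff[of Q] by blast
  define P where "P = take m p1"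
  have lP: "length P = m" using m(1) unfolding P_def Q_def by simp
  have "prim P"
    unfolding prim_def
  proof (intro conjI allI impI)
    show "even_pal P" using m(1) unfolding P_def Q_def by simp
    fix j assume "0 < j \<and> j < length P"
    moreover have "take j P = take j p1" using calculation lP unfolding P_def by simp
    ultimately show "\<not> even_pal (take j P)" using m(2) lP m(1) unfolding Q_def by auto
  qed
  then obtain s where s: "palstar s" "p1 = P @ s"
    using kmp_step[of P p1] palstar_app m(1) lP unfolding P_def Q_def by auto
  then show ?thesis using palstar_app palstar_append \<open>prim P\<close> by fastforce
qed

lemma palstar_even: "palstar w \<Longrightarrow> even (length w)"
  by (induction rule: palstar.induct) (auto simp: even_pal_iff)

definition lsn :: "'a set \<Rightarrow> nat \<Rightarrow> 'a list set" where
  "lsn S n = {x \<in> lists S. length x = n}"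

lemma lsn_eq: "lsn S n = {xs. set xs \<subseteq> S \<and> length xs = n}"
  by (auto simp: lsn_def)

lemma lsn_finite: "finite S \<Longrightarrow> finite (lsn S n)"
  by (simp add: lsn_eq finite_lists_length_eq)

lemma lsn_card: "finite S \<Longrightarrow> card (lsn S n) = card S ^ n"
  by (simp add: lsn_eq card_lists_length_eq)

lemma card_app_image:
  assumes "finite A" "finite B" "\<forall>a\<in>A. length a = c"
  shows "card ((\<lambda>(a,b). a @ b) ` (A \<times> B)) = card A * card B"
proof -
  have "inj_on (\<lambda>(a,b). a @ b) (A \<times> B)"
    using assms(3) by (auto simp: inj_on_def append_eq_append_conv)
  thus ?thesis by (simp add: card_image card_cartesian_product)
qed

definition PS :: "'a set \<Rightarrow> nat \<Rightarrow> 'a list set" where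
  "PS S m = {w \<in> lists S. length w = 2*m \<and> palstar w}"

definition PR :: "'a set \<Rightarrow> nat \<Rightarrow> 'a list set" where
  "PR S i = {P \<in> lists S. length P = 2*i \<and> prim P}"

lemma PS_finite: "finite S \<Longrightarrow> finite (PS S m)"
  by (rule finite_subset[OF _ lsn_finite[of S "2*m"]]) (auto simp: PS_def lsn_def)

lemma PR_finite: "finite S \<Longrightarrow> finite (PR S m)"
  by (rule finite_subset[OF _ lsn_finite[of S "2*m"]]) (auto simp: PR_def lsn_def)

lemma pal_rec:
  assumes fin: "finite S" and n: "1 \<le> n"
  shows "card (PS S n) = (\<Sum>i=1..n. card (PR S i) * card (PS S (n-i)))"
proof -
  define T where "T i = {w \<in> PS S n. prim (take (2*i) w) \<and> palstar (drop (2*i) w)}" for i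
  have cover: "PS S n = (\<Union>i\<in>{1..n}. T i)"
  proof
    show "(\<Union>i\<in>{1..n}. T i) \<subseteq> PS S n" unfolding T_def by auto
  next
    show "PS S n \<subseteq> (\<Union>i\<in>{1..n}. T i)"
    proof
      fix w assume w: "w \<in> PS S n"
      hence "w \<noteq> []" "palstar w" "length w = 2*n" using n unfolding PS_def by auto
      then obtain P w' where Pw: "prim P" "palstar w'" "w = P @ w'" using palstar_decomp by blast
      have "even (length P)" "P \<noteq> []" using Pw(1) unfolding prim_def even_pal_iff by auto
      then obtain i where i: "length P = 2*i" "1 \<le> i" by (metis evenE less_one not_less length_0_conv mult_0_right)
      have "i \<le> n" using i Pw \<open>length w = 2*n\<close> by simp
      have "w \<in> T i" using w Pw i unfolding T_def by simp
      thus "w \<in> (\<Union>i\<in>{1..n}. T i)" using i \<open>i \<le> n\<close> by auto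
    qed
  qed
  have disj: "T i \<inter> T j = {}" if "i \<noteq> j" "i \<le> n" "j \<le> n" for i j
  proof (rule ccontr)
    assume "T i \<inter> T j \<noteq> {}"
    then obtain w where w: "w \<in> T i" "w \<in> T j" by blast
    hence l: "length w = 2*n" unfolding T_def PS_def by auto
    have "take (2*i) w = take (2*j) w"
      by (rule prim_unique[of _ _ w]) (use w l that in \<open>auto simp: T_def min_def\<close>)
    hence "2*i = 2*j" using l that by (metis length_take min.absorb2 mult_le_mono2)
    thus False using that by simp
  qed
  have Teq: "T i = (\<lambda>(a,b). a @ b) ` (PR S i \<times> PS S (n-i))" if "i \<le> n" for i
  proof
    show "T i \<subseteq> (\<lambda>(a,b). a @ b) ` (PR S i \<times> PS S (n-i))"
    proof
      fix w assume "w \<in> T i"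
      hence w: "w \<in> lists S" "length w = 2*n" "prim (take (2*i) w)" "palstar (drop (2*i) w)"
        unfolding T_def PS_def by auto
      have "take (2*i) w \<in> PR S i" using w that unfolding PR_def by (auto dest: in_set_takeD)
      moreover have "drop (2*i) w \<in> PS S (n-i)" using w that unfolding PS_def by (auto dest: in_set_dropD)
      ultimately show "w \<in> (\<lambda>(a,b). a @ b) ` (PR S i \<times> PS S (n-i))"
        by (metis (no_types, lifting) append_take_drop_id case_prod_conv image_eqI mem_Sigma_iff)
    qed
  next
    show "(\<lambda>(a,b). a @ b) ` (PR S i \<times> PS S (n-i)) \<subseteq> T i"
    proof clarify
      fix a b assume "a \<in> PR S i" "b \<in> PS S (n-i)"
      then show "a @ b \<in> T i" using that unfolding T_def PS_def PR_def
        by (auto intro: palstar_append palstar_app simp: prim_def)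
    qed
  qed
  have "card (PS S n) = (\<Sum>i\<in>{1..n}. card (T i))"
    unfolding cover
    by (rule card_UN_disjoint) (use disj in \<open>auto simp: T_def intro: finite_subset[OF _ PS_finite[OF fin]]\<close>)
  also have "\<dots> = (\<Sum>i=1..n. card (PR S i) * card (PS S (n-i)))"
  proof (rule sum.cong)
    fix i assume "i \<in> {1..n}"
    then show "card (T i) = card (PR S i) * card (PS S (n-i))"
      using Teq[of i] card_app_image[OF PR_finite[OF fin] PS_finite[OF fin], of i "2*i" "n-i"]
      by (auto simp: PR_def)
  qed simp
  finally show ?thesis .
qed

lemma Q_prim:
  assumes H: "\<forall>j. 0 < j \<and> j \<le> length x \<longrightarrow> \<not> even_pal (take j x)" and ne: "x \<noteq> []"
  shows "prim (x @ rev x)"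
proof -
  define P where "P = x @ rev x"
  define n where "n = length x"
  have lP: "length P = 2*n" unfolding P_def n_def by simp
  have rP: "rev P = P" unfolding P_def by simp
  have eP: "even_pal P" unfolding P_def even_pal_def using ne by blast
  show ?thesis
  proof (rule ccontr)
    assume "\<not> prim (x @ rev x)"
    hence "\<exists>j. 0 < j \<and> j < length P \<and> even_pal (take j P)" using eP unfolding prim_def P_def by blast
    then obtain m where m: "0 < m \<and> m < length P \<and> even_pal (take m P)"
      and least: "\<forall>j<m. \<not> (0 < j \<and> j < length P \<and> even_pal (take j P))"
      using exists_least_iff[of "\<lambda>j. 0 < j \<and> j < length P \<and> even_pal (take j P)"] by blast
    show False
    proof (cases "m \<le> n")
      case True
      have "take m P = take m x" using True unfolding P_def n_def by simp
      then show ?thesis using H m True unfolding n_def by auto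
    next
      case False
      have pm: "rev (take m P) = take m P" "even m" using m by (auto simp: even_pal_iff)
      have B: "take m P = drop (length P - m) P" using pal_prefix_border[OF rP pm(1)] .
      define r where "r = 2*m - length P"
      have Br: "take r P = drop (length P - r) P"
        using border_shift[OF B] False m lP unfolding r_def by auto
      have "rev (take r P) = take r P" using border_pal[OF rP Br] .
      moreover have "even r" "0 < r" "r < m" using False m pm(2) lP unfolding r_def by auto
      ultimately have "even_pal (take r P)" using m by (auto simp: even_pal_iff min_def)
      then show ?thesis using least \<open>0 < r\<close> \<open>r < m\<close> m by auto
    qed
  qed
qed

lemma PR_rec:
  assumes fin: "finite S" and n: "1 \<le> n"
  shows "card S ^ n = card (PR S n) + (\<Sum>j=1..n div 2. card (PR S j) * card S ^ (n - 2*j))"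
proof -
  define Q where "Q = {x \<in> lsn S n. \<forall>j. 0 < j \<and> j \<le> n \<longrightarrow> \<not> even_pal (take j x)}"
  define R where "R j = {x \<in> lsn S n. prim (take (2*j) x)}" for j
  have PRQ: "PR S n = (\<lambda>x. x @ rev x) ` Q"
  proof
    show "(\<lambda>x. x @ rev x) ` Q \<subseteq> PR S n"
    proof clarify
      fix x assume "x \<in> Q"
      hence x: "x \<in> lists S" "length x = n" "\<forall>j. 0 < j \<and> j \<le> n \<longrightarrow> \<not> even_pal (take j x)"
        unfolding Q_def lsn_def by auto
      have "x \<noteq> []" using x n by auto
      then have "prim (x @ rev x)" using Q_prim x by metis
      then show "x @ rev x \<in> PR S n" using x unfolding PR_def by auto
    qed
  next
    show "PR S n \<subseteq> (\<lambda>x. x @ rev x) ` Q"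
    proof
      fix P assume "P \<in> PR S n"
      hence P: "P \<in> lists S" "length P = 2*n" "prim P" unfolding PR_def by auto
      then obtain y where y: "P = y @ rev y" unfolding prim_def even_pal_def by blast
      have ly: "length y = n" using y P(2) by simp
      have "y \<in> Q" unfolding Q_def lsn_def
      proof (intro CollectI conjI allI impI)
        show "y \<in> lists S" using P(1) y by simp
        show "length y = n" by fact
        fix j assume j: "0 < j \<and> j \<le> n"
        have "take j y = take j P" using y ly j by simp
        then show "\<not> even_pal (take j y)" using P j unfolding prim_def by auto
      qed
      then show "P \<in> (\<lambda>x. x @ rev x) ` Q" using y by blast
    qed
  qed
  have "inj_on (\<lambda>x. x @ rev x) Q"
    unfolding inj_on_def Q_def lsn_def by (auto simp: append_eq_append_conv)
  hence cPR: "card (PR S n) = card Q" using PRQ card_image by metis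
  have cover: "lsn S n = Q \<union> (\<Union>j\<in>{1..n div 2}. R j)"
  proof
    show "Q \<union> (\<Union>j\<in>{1..n div 2}. R j) \<subseteq> lsn S n" unfolding Q_def R_def by auto
  next
    show "lsn S n \<subseteq> Q \<union> (\<Union>j\<in>{1..n div 2}. R j)"
    proof
      fix x assume x: "x \<in> lsn S n"
      show "x \<in> Q \<union> (\<Union>j\<in>{1..n div 2}. R j)"
      proof (cases "x \<in> Q")
        case False
        then have "\<exists>j. 0 < j \<and> j \<le> n \<and> even_pal (take j x)" using x unfolding Q_def by auto
        then obtain m where m: "0 < m \<and> m \<le> n \<and> even_pal (take m x)"
          and least: "\<forall>j<m. \<not> (0 < j \<and> j \<le> n \<and> even_pal (take j x))"
          using exists_least_iff[of "\<lambda>j. 0 < j \<and> j \<le> n \<and> even_pal (take j x)"] by blast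
        have lx: "length x = n" using x unfolding lsn_def by simp
        have "even m" using m lx by (auto simp: even_pal_iff min_def split: if_splits)
        then obtain j where j: "m = 2*j" by (metis evenE)
        have "prim (take m x)" unfolding prim_def
        proof (intro conjI allI impI)
          show "even_pal (take m x)" using m by simp
          fix i assume "0 < i \<and> i < length (take m x)"
          then show "\<not> even_pal (take i (take m x))" using least m by auto
        qed
        then have "x \<in> R j" using x j unfolding R_def by simp
        moreover have "j \<in> {1..n div 2}" using j m by auto
        ultimately show ?thesis by blast
      qed simp
    qed
  qed
  have disjQ: "Q \<inter> R j = {}" if "j \<in> {1..n div 2}" for j
    using that unfolding Q_def R_def prim_def by auto
  have disjR: "R i \<inter> R j = {}" if "i \<noteq> j" "i \<in> {1..n div 2}" "j \<in> {1..n div 2}" for i j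
  proof (rule ccontr)
    assume "R i \<inter> R j \<noteq> {}"
    then obtain w where w: "w \<in> R i" "w \<in> R j" by blast
    hence l: "length w = n" unfolding R_def lsn_def by auto
    have "take (2*i) w = take (2*j) w"
      by (rule prim_unique[of _ _ w]) (use w l that in \<open>auto simp: R_def min_def\<close>)
    hence "length (take (2*i) w) = length (take (2*j) w)" by simp
    moreover have "2*i \<le> length w" "2*j \<le> length w" using l that by auto
    ultimately have "2*i = 2*j" by (simp add: min_absorb2)
    thus False using that by simp
  qed
  have Req: "R j = (\<lambda>(a,b). a @ b) ` (PR S j \<times> lsn S (n - 2*j))" if "j \<in> {1..n div 2}" for j
  proof
    show "R j \<subseteq> (\<lambda>(a,b). a @ b) ` (PR S j \<times> lsn S (n - 2*j))"
    proof
      fix w assume "w \<in> R j"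
      hence w: "w \<in> lists S" "length w = n" "prim (take (2*j) w)"
        unfolding R_def lsn_def by auto
      have "take (2*j) w \<in> PR S j" using w that unfolding PR_def by (auto dest: in_set_takeD)
      moreover have "drop (2*j) w \<in> lsn S (n - 2*j)" using w that unfolding lsn_def by (auto dest: in_set_dropD)
      ultimately show "w \<in> (\<lambda>(a,b). a @ b) ` (PR S j \<times> lsn S (n - 2*j))"
        by (metis (no_types, lifting) append_take_drop_id case_prod_conv image_eqI mem_Sigma_iff)
    qed
  next
    show "(\<lambda>(a,b). a @ b) ` (PR S j \<times> lsn S (n - 2*j)) \<subseteq> R j"
    proof clarify
      fix a b assume "a \<in> PR S j" "b \<in> lsn S (n - 2*j)"
      then show "a @ b \<in> R j" using that unfolding R_def lsn_def PR_def by auto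
    qed
  qed
  have finR: "finite (R j)" for j
    by (rule finite_subset[OF _ lsn_finite[OF fin, of n]]) (auto simp: R_def)
  have finQ: "finite Q" by (rule finite_subset[OF _ lsn_finite[OF fin, of n]]) (auto simp: Q_def)
  have "card S ^ n = card (lsn S n)" using lsn_card[OF fin] by simp
  also have "\<dots> = card Q + card (\<Union>j\<in>{1..n div 2}. R j)"
    unfolding cover by (rule card_Un_disjoint) (use finQ finR disjQ in \<open>auto, blast\<close>)
  also have "card (\<Union>j\<in>{1..n div 2}. R j) = (\<Sum>j\<in>{1..n div 2}. card (R j))"
    by (rule card_UN_disjoint) (use finR disjR in auto)
  also have "\<dots> = (\<Sum>j=1..n div 2. card (PR S j) * card S ^ (n - 2*j))"
  proof (rule sum.cong)
    fix j assume j: "j \<in> {1..n div 2}"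
    then show "card (R j) = card (PR S j) * card S ^ (n - 2*j)"
      using Req[OF j] card_app_image[OF PR_finite[OF fin] lsn_finite[OF fin], of j "2*j" "n-2*j"]
        lsn_card[OF fin]
      by (auto simp: PR_def)
  qed simp
  finally show ?thesis using cPR by simp
qed

lemma unb_iff: "unbordered x \<longleftrightarrow> (\<forall>m. 0 < m \<and> m < length x \<longrightarrow> take m x \<noteq> drop (length x - m) x)"
proof
  assume u: "unbordered x"
  show "\<forall>m. 0 < m \<and> m < length x \<longrightarrow> take m x \<noteq> drop (length x - m) x"
  proof (intro allI impI notI)
    fix m assume m: "0 < m \<and> m < length x" and e: "take m x = drop (length x - m) x"
    have "is_border (take m x) x" unfolding is_border_def
    proof (intro conjI)
      show "take m x \<noteq> []" using m by (cases x) auto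
      show "take m x \<noteq> x" using m by (metis length_take min.absorb2 less_imp_le less_irrefl)
      show "prefix (take m x) x" by (rule take_is_prefix)
      show "suffix (take m x) x" unfolding e by (rule suffix_drop)
    qed
    thus False using u unfolding unbordered_def by blast
  qed
next
  assume H: "\<forall>m. 0 < m \<and> m < length x \<longrightarrow> take m x \<noteq> drop (length x - m) x"
  show "unbordered x" unfolding unbordered_def
  proof
    assume "\<exists>c. is_border c x"
    then obtain c where c: "c \<noteq> []" "c \<noteq> x" "prefix c x" "suffix c x" unfolding is_border_def by blast
    obtain zs where zs: "x = c @ zs" using c(3) unfolding prefix_def by blast
    obtain ws where ws: "x = ws @ c" using c(4) unfolding suffix_def by blast
    have "zs \<noteq> []" using zs c(2) by auto
    hence lt: "0 < length c" "length c < length x" using zs c(1) by auto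
    have "take (length c) x = c" using zs by simp
    moreover have "drop (length x - length c) x = c" using ws by simp
    ultimately show False using H lt by metis
  qed
qed

definition UB :: "'a set \<Rightarrow> nat \<Rightarrow> 'a list set" where
  "UB S i = {w \<in> lists S. length w = i \<and> unbordered w}"

lemma UB_finite: "finite S \<Longrightarrow> finite (UB S m)"
  by (rule finite_subset[OF _ lsn_finite[of S m]]) (auto simp: UB_def lsn_def)

lemma UB_rec:
  assumes fin: "finite S" and n: "1 \<le> n"
  shows "card S ^ n = card (UB S n) + (\<Sum>i=1..n div 2. card (UB S i) * card S ^ (n - 2*i))"
proof -
  define B where "B i = {x \<in> lsn S n. take i x = drop (n - i) x \<and> unbordered (take i x)}" for i
  have cover: "lsn S n = UB S n \<union> (\<Union>i\<in>{1..n div 2}. B i)"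
  proof
    show "UB S n \<union> (\<Union>i\<in>{1..n div 2}. B i) \<subseteq> lsn S n" unfolding UB_def B_def lsn_def by auto
  next
    show "lsn S n \<subseteq> UB S n \<union> (\<Union>i\<in>{1..n div 2}. B i)"
    proof
      fix x assume x: "x \<in> lsn S n"
      have lx: "length x = n" using x unfolding lsn_def by simp
      show "x \<in> UB S n \<union> (\<Union>i\<in>{1..n div 2}. B i)"
      proof (cases "unbordered x")
        case True
        then show ?thesis using x unfolding UB_def lsn_def by auto
      next
        case False
        then have "\<exists>m. 0 < m \<and> m < n \<and> take m x = drop (n - m) x" using lx unb_iff by metis
        then obtain m where m: "0 < m \<and> m < n \<and> take m x = drop (n - m) x"
          and least: "\<forall>j<m. \<not> (0 < j \<and> j < n \<and> take j x = drop (n - j) x)"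
          using exists_least_iff[of "\<lambda>m. 0 < m \<and> m < n \<and> take m x = drop (n - m) x"] by blast
        have m2: "2*m \<le> n"
        proof (rule ccontr)
          assume "\<not> 2*m \<le> n"
          hence "take (2*m - n) x = drop (n - (2*m - n)) x"
            using border_shift[of m x] m lx by auto
          moreover have "2*m - n < m" "0 < 2*m - n" "2*m - n < n" using m \<open>\<not> 2*m \<le> n\<close> by auto
          ultimately show False using least by blast
        qed
        have "unbordered (take m x)"
          unfolding unb_iff
        proof (intro allI impI notI)
          fix c assume c: "0 < c \<and> c < length (take m x)"
            and e: "take c (take m x) = drop (length (take m x) - c) (take m x)"
          have cm: "c < m" using c by simp
          have "take c x = take c (take m x)" using cm by simp
          also have "\<dots> = drop (m - c) (take m x)" using e m lx by (simp add: min_absorb1)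
          also have "\<dots> = drop (m - c) (drop (n - m) x)" using m by simp
          also have "\<dots> = drop (n - c) x" using cm m by simp
          finally show False using least cm c m by auto
        qed
        then have "x \<in> B m" using x m unfolding B_def by simp
        moreover have "m \<in> {1..n div 2}" using m m2 by auto
        ultimately show ?thesis by blast
      qed
    qed
  qed
  have disjU: "UB S n \<inter> B i = {}" if "i \<in> {1..n div 2}" for i
  proof -
    have "x \<notin> B i" if "x \<in> UB S n" for x
      using that \<open>i \<in> {1..n div 2}\<close> unfolding UB_def B_def unb_iff by auto
    thus ?thesis by blast
  qed
  have disjB: "B i \<inter> B j = {}" if "i < j" "i \<in> {1..n div 2}" "j \<in> {1..n div 2}" for i j
  proof (rule ccontr)
    assume "B i \<inter> B j \<noteq> {}"
    then obtain x where x: "x \<in> B i" "x \<in> B j" by blast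
    hence l: "length x = n" unfolding B_def lsn_def by auto
    have bi: "take i x = drop (n - i) x" and bj: "take j x = drop (n - j) x"
      and u: "unbordered (take j x)" using x unfolding B_def by auto
    have "take i (take j x) = take i x" using that by simp
    also have "\<dots> = drop (n - i) x" by (rule bi)
    also have "\<dots> = drop (j - i) (drop (n - j) x)" using that by simp
    also have "\<dots> = drop (j - i) (take j x)" using bj by simp
    finally have "take i (take j x) = drop (length (take j x) - i) (take j x)" using that l by simp
    moreover have "0 < i" "i < length (take j x)" using that l by auto
    ultimately show False using u unfolding unb_iff by blast
  qed
  have disjB': "B i \<inter> B j = {}" if "i \<noteq> j" "i \<in> {1..n div 2}" "j \<in> {1..n div 2}" for i j
    using disjB[of i j] disjB[of j i] that by (cases "i < j") auto
  define f where "f = (\<lambda>(b::'a list, y::'a list). b @ y @ b)"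
  have Beq: "B i = f ` (UB S i \<times> lsn S (n - 2*i))" if "i \<in> {1..n div 2}" for i
  proof
    show "B i \<subseteq> f ` (UB S i \<times> lsn S (n - 2*i))"
    proof
      fix x assume "x \<in> B i"
      hence x: "x \<in> lists S" "length x = n" "take i x = drop (n - i) x" "unbordered (take i x)"
        unfolding B_def lsn_def by auto
      define y where "y = take (n - 2*i) (drop i x)"
      have eqn: "n - 2*i + i = n - i" using that by auto
      have "drop i x = y @ drop (n - 2*i) (drop i x)" unfolding y_def by (rule append_take_drop_id[symmetric])
      also have "drop (n - 2*i) (drop i x) = drop (n - i) x" using eqn by simp
      finally have "x = take i x @ y @ take i x" using x(3) by (metis append_take_drop_id)
      hence "x = f (take i x, y)" unfolding f_def by simp
      moreover have "take i x \<in> UB S i" using x that set_take_subset[of i x] set_drop_subset[of "n - i" x] unfolding UB_def by auto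
      moreover have "y \<in> lsn S (n - 2*i)" using x that unfolding lsn_def y_def
        by (auto dest: in_set_takeD in_set_dropD)
      ultimately show "x \<in> f ` (UB S i \<times> lsn S (n - 2*i))" by blast
    qed
  next
    show "f ` (UB S i \<times> lsn S (n - 2*i)) \<subseteq> B i"
    proof clarify
      fix b y assume "b \<in> UB S i" "y \<in> lsn S (n - 2*i)"
      then show "f (b, y) \<in> B i" using that unfolding B_def lsn_def UB_def f_def by auto
    qed
  qed
  have injf: "inj_on f (UB S i \<times> lsn S (n - 2*i))" for i
    unfolding inj_on_def f_def UB_def lsn_def by (auto simp: append_eq_append_conv)
  have finB: "finite (B j)" for j
    by (rule finite_subset[OF _ lsn_finite[OF fin, of n]]) (auto simp: B_def)
  have "card S ^ n = card (lsn S n)" using lsn_card[OF fin] by simp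
  also have "\<dots> = card (UB S n) + card (\<Union>j\<in>{1..n div 2}. B j)"
    unfolding cover by (rule card_Un_disjoint) (use UB_finite[OF fin] finB disjU in \<open>auto, blast\<close>)
  also have "card (\<Union>j\<in>{1..n div 2}. B j) = (\<Sum>j\<in>{1..n div 2}. card (B j))"
    by (rule card_UN_disjoint) (use finB disjB' in auto)
  also have "\<dots> = (\<Sum>i=1..n div 2. card (UB S i) * card S ^ (n - 2*i))"
  proof (rule sum.cong)
    fix j assume j: "j \<in> {1..n div 2}"
    then show "card (B j) = card (UB S j) * card S ^ (n - 2*j)"
      using Beq[OF j] card_image[OF injf[of j]] lsn_card[OF fin]
      by (simp add: card_cartesian_product)
  qed simp
  finally show ?thesis by simp
qed

lemma PR_UB:
  assumes fin: "finite S"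
  shows "1 \<le> n \<Longrightarrow> card (PR S n) = card (UB S n)"
proof (induction n rule: less_induct)
  case (less n)
  have X: "(\<Sum>j=1..n div 2. card (PR S j) * card S ^ (n - 2*j)) = (\<Sum>j=1..n div 2. card (UB S j) * card S ^ (n - 2*j))"
  proof (rule sum.cong)
    fix j assume "j \<in> {1..n div 2}"
    hence "j < n" "1 \<le> j" using less.prems by auto
    hence "card (PR S j) = card (UB S j)" using less.IH by blast
    thus "card (PR S j) * card S ^ (n - 2*j) = card (UB S j) * card S ^ (n - 2*j)" by (rule arg_cong)
  qed (rule refl)
  have e1: "card S ^ n = card (PR S n) + (\<Sum>j=1..n div 2. card (PR S j) * card S ^ (n - 2*j))"
    by (rule PR_rec[OF fin less.prems])
  have e2: "card S ^ n = card (UB S n) + (\<Sum>j=1..n div 2. card (UB S j) * card S ^ (n - 2*j))"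
    by (rule UB_rec[OF fin less.prems])
  show ?case using e1 e2 X by linarith
qed

theorem lemma1:
  fixes \<Sigma> :: "'a set" and k n :: nat
  assumes "finite \<Sigma>" and "card \<Sigma> = k" and "k \<ge> 2" and "n \<ge> 1"
  shows "pal_count \<Sigma> n = (\<Sum>i=1..n. unb_count \<Sigma> i * pal_count \<Sigma> (n - i))"
proof -
  have "pal_count \<Sigma> n = card (PS \<Sigma> n)" unfolding pal_count_def PS_def by simp
  also have "\<dots> = (\<Sum>i=1..n. card (PR \<Sigma> i) * card (PS \<Sigma> (n-i)))"
    using pal_rec[OF assms(1)] assms(4) by simp
  also have "\<dots> = (\<Sum>i=1..n. unb_count \<Sigma> i * pal_count \<Sigma> (n - i))"
  proof (rule sum.cong)
    fix i assume "i \<in> {1..n}"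
    then show "card (PR \<Sigma> i) * card (PS \<Sigma> (n-i)) = unb_count \<Sigma> i * pal_count \<Sigma> (n - i)"
      using PR_UB[OF assms(1), of i] unfolding unb_count_def pal_count_def UB_def PS_def by simp
  qed simp
  finally show ?thesis .
qed

end
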